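(* Let $\Bbbk$ be a field. Let $A'$ be a standard graded artinian $\Bbbk$-algebra failing the WLP, and let $A''$ be a standard graded artinian $\Bbbk$-algebra whose Hilbert series has at least one isolated peak. Then $A = A' \otimes_\Bbbk A''$ fails the WLP. Specifically, if $A'$ fails the WLP in degree $i$ and the Hilbert series of $A''$ has an isolated peak in degree $j$, then $A$ fails the WLP in degree $i+j$.
   Context: A standard graded artinian algebra $A=\bigoplus_i A_i$ has the WLP if there is a linear form $\ell$ such that $\times\ell:A_k\to A_{k+1}$ has maximal rank (is injective or surjective) for every $k$. $A$ fails the WLP in degree $i$ if for a general linear form $\ell$ the map $\times \ell: A_i\to A_{i+1}$ does not have maximal rank. The Hilbert function is $\mathrm{HF}(A,k)=\dim_\Bbbk A_k$; the Hilbert series has an isolated peak in degree $j\ge 1$ if $\mathrm{HF}(A,j-1)<\mathrm{HF}(A,j)>\mathrm{HF}(A,j+1)$. *)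

theory Defs
  imports Complex_Main "HOL-Library.Poly_Mapping"
begin

text \<open>A standard graded artinian algebra is presented as P / I with P a polynomial
  ring in finitely many variables (a finite variable type) and I a proper
  homogeneous ideal such that (P/I)_d = 0 for d large.\<close>

type_synonym ('v, 'k) mpoly = "('v \<Rightarrow>\<^sub>0 nat) \<Rightarrow>\<^sub>0 'k"

definition mdeg :: "('v \<Rightarrow>\<^sub>0 nat) \<Rightarrow> nat" where
  "mdeg m = (\<Sum>v\<in>Poly_Mapping.keys m. Poly_Mapping.lookup m v)"

definition homogeneous :: "nat \<Rightarrow> ('v, 'k::zero) mpoly \<Rightarrow> bool" where
  "homogeneous d p \<longleftrightarrow> (\<forall>m\<in>Poly_Mapping.keys p. mdeg m = d)"

definition hcomp :: "nat \<Rightarrow> ('v, 'k::comm_monoid_add) mpoly \<Rightarrow> ('v, 'k) mpoly" where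
  "hcomp d p = (\<Sum>m\<in>{m\<in>Poly_Mapping.keys p. mdeg m = d}. Poly_Mapping.single m (Poly_Mapping.lookup p m))"

definition is_ideal :: "('v, 'k::comm_ring_1) mpoly set \<Rightarrow> bool" where
  "is_ideal I \<longleftrightarrow> 0 \<in> I \<and> (\<forall>p\<in>I. \<forall>q\<in>I. p + q \<in> I) \<and> (\<forall>f. \<forall>p\<in>I. f * p \<in> I)"

definition homog_ideal :: "('v, 'k::comm_ring_1) mpoly set \<Rightarrow> bool" where
  "homog_ideal I \<longleftrightarrow> is_ideal I \<and> (\<forall>p\<in>I. \<forall>d. hcomp d p \<in> I)"

definition ideal_gen :: "('v, 'k::comm_ring_1) mpoly set \<Rightarrow> ('v, 'k) mpoly set" where
  "ideal_gen S = \<Inter>{K. is_ideal K \<and> S \<subseteq> K}"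

definition std_graded_artinian :: "('v::finite, 'k::field) mpoly set \<Rightarrow> bool" where
  "std_graded_artinian I \<longleftrightarrow> homog_ideal I \<and> 1 \<notin> I \<and>
     (\<exists>N. \<forall>d\<ge>N. \<forall>p. homogeneous d p \<longrightarrow> p \<in> I)"

text \<open>k-vector space structure on polynomials (scalars = constants).\<close>
definition psmult :: "'k::comm_ring_1 \<Rightarrow> ('v, 'k) mpoly \<Rightarrow> ('v, 'k) mpoly" where
  "psmult c p = Poly_Mapping.single 0 c * p"

text \<open>Hilbert function: dim_k (P/I)_d = dim_k P_d - dim_k I_d.\<close>
definition hf :: "('v::finite, 'k::field) mpoly set \<Rightarrow> nat \<Rightarrow> nat" where
  "hf I d = vector_space.dim psmult {p :: ('v, 'k) mpoly. homogeneous d p}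
          - vector_space.dim psmult {p \<in> I. homogeneous d p}"

definition isolated_peak :: "('v::finite, 'k::field) mpoly set \<Rightarrow> nat \<Rightarrow> bool" where
  "isolated_peak I j \<longleftrightarrow> j \<ge> 1 \<and> hf I (j - 1) < hf I j \<and> hf I (j + 1) < hf I j"

text \<open>Multiplication by (the class of) the linear form l, (P/I)_i \<rightarrow> next degree,
  has maximal rank: injective or surjective.\<close>
definition max_rank :: "('v, 'k::field) mpoly set \<Rightarrow> ('v, 'k) mpoly \<Rightarrow> nat \<Rightarrow> bool" where
  "max_rank I l i \<longleftrightarrow>
     (\<forall>f. homogeneous i f \<and> l * f \<in> I \<longrightarrow> f \<in> I) \<or>
     (\<forall>g. homogeneous (i + 1) g \<longrightarrow> (\<exists>f. homogeneous i f \<and> g - l * f \<in> I))"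

definition has_WLP :: "('v, 'k::field) mpoly set \<Rightarrow> bool" where
  "has_WLP I \<longleftrightarrow> (\<exists>l. homogeneous 1 l \<and> (\<forall>k. max_rank I l k))"

definition fails_WLP_in :: "('v, 'k::field) mpoly set \<Rightarrow> nat \<Rightarrow> bool" where
  "fails_WLP_in I i \<longleftrightarrow> (\<forall>l. homogeneous 1 l \<longrightarrow> \<not> max_rank I l i)"

text \<open>Tensor product: (k[x]/I) \<otimes>_k (k[y]/J) = k[x,y]/(I k[x,y] + J k[x,y]).\<close>
definition mon_l :: "('a \<Rightarrow>\<^sub>0 nat) \<Rightarrow> ('a + 'b \<Rightarrow>\<^sub>0 nat)" where
  "mon_l m = (\<Sum>a\<in>Poly_Mapping.keys m. Poly_Mapping.single (Inl a) (Poly_Mapping.lookup m a))"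

definition mon_r :: "('b \<Rightarrow>\<^sub>0 nat) \<Rightarrow> ('a + 'b \<Rightarrow>\<^sub>0 nat)" where
  "mon_r m = (\<Sum>b\<in>Poly_Mapping.keys m. Poly_Mapping.single (Inr b) (Poly_Mapping.lookup m b))"

definition emb_l :: "('a, 'k::comm_monoid_add) mpoly \<Rightarrow> ('a + 'b, 'k) mpoly" where
  "emb_l p = (\<Sum>m\<in>Poly_Mapping.keys p. Poly_Mapping.single (mon_l m) (Poly_Mapping.lookup p m))"

definition emb_r :: "('b, 'k::comm_monoid_add) mpoly \<Rightarrow> ('a + 'b, 'k) mpoly" where
  "emb_r p = (\<Sum>m\<in>Poly_Mapping.keys p. Poly_Mapping.single (mon_r m) (Poly_Mapping.lookup p m))"

definition tensor_ideal :: "('a, 'k::comm_ring_1) mpoly set \<Rightarrow> ('b, 'k) mpoly set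
    \<Rightarrow> ('a + 'b, 'k) mpoly set" where
  "tensor_ideal I J = ideal_gen (emb_l ` I \<union> emb_r ` J)"

end

theory Submission
  imports Defs
begin

abbreviation (input) lk where "lk \<equiv> Poly_Mapping.lookup"
abbreviation (input) ks where "ks \<equiv> Poly_Mapping.keys"
abbreviation (input) sg where "sg \<equiv> Poly_Mapping.single"

lemma mpoly_expand: "p = (\<Sum>m\<in>ks p. sg m (lk p m))"
  by (rule poly_mapping_eqI)
     (auto simp: lookup_sum lookup_single when_def in_keys_iff sum.delta' split: if_splits)

lemma mdeg_superset: "finite S \<Longrightarrow> ks m \<subseteq> S \<Longrightarrow> mdeg m = (\<Sum>v\<in>S. lk m v)"
  unfolding mdeg_def by (rule sum.mono_neutral_left) (auto simp: in_keys_iff)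

lemma mdeg_add: "mdeg (m + n) = mdeg m + mdeg n"
proof -
  let ?S = "ks m \<union> ks n"
  have "ks (m + n) \<subseteq> ?S" by (rule keys_add)
  hence "mdeg (m + n) = (\<Sum>v\<in>?S. lk (m+n) v)" by (intro mdeg_superset) auto
  also have "\<dots> = (\<Sum>v\<in>?S. lk m v) + (\<Sum>v\<in>?S. lk n v)"
    by (simp add: lookup_add sum.distrib)
  also have "\<dots> = mdeg m + mdeg n"
    by (subst (1 2) mdeg_superset[of ?S]) auto
  finally show ?thesis .
qed

lemma mdeg_zero[simp]: "mdeg 0 = 0"
  by (simp add: mdeg_def)

lemma mdeg_eq_0: "mdeg m = 0 \<longleftrightarrow> m = 0"
proof
  assume "mdeg m = 0"
  hence "\<forall>v\<in>ks m. lk m v = 0" unfolding mdeg_def by simp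
  thus "m = 0" by (metis keys_eq_empty all_not_in_conv in_keys_iff)
qed simp

lemma mdeg_single[simp]: "mdeg (sg v k) = k"
  by (cases "k = 0") (auto simp: mdeg_def)

lemma homogeneous_iff: "homogeneous d p \<longleftrightarrow> (\<forall>m. lk p m \<noteq> 0 \<longrightarrow> mdeg m = d)"
  by (auto simp: homogeneous_def in_keys_iff)

lemma lookup_psmult: "lk (psmult c p) m = c * lk p m"
  unfolding psmult_def mult_map_scale_conv_mult[symmetric]
  by (simp add: map.rep_eq when_def)

lemma hom_0[simp]: "homogeneous d 0"
  by (simp add: homogeneous_iff)

lemma hom_add: "homogeneous d p \<Longrightarrow> homogeneous d q \<Longrightarrow> homogeneous d (p + q)"
  unfolding homogeneous_iff lookup_add by (metis add.right_neutral)

lemma hom_uminus: "homogeneous d p \<Longrightarrow> homogeneous d (- p)"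
  by (auto simp: homogeneous_iff)

lemma hom_diff: "homogeneous d (p::('v,'k::ab_group_add) mpoly) \<Longrightarrow> homogeneous d q \<Longrightarrow> homogeneous d (p - q)"
  using hom_add[OF _ hom_uminus, of d p q] by simp

lemma hom_psmult: "homogeneous d p \<Longrightarrow> homogeneous d (psmult c p)"
  unfolding homogeneous_iff lookup_psmult by (metis mult_zero_right)

lemma hom_mult: "homogeneous a p \<Longrightarrow> homogeneous b q \<Longrightarrow> homogeneous (a + b) (p * q)"
  unfolding homogeneous_def using keys_mult[of p q] by (auto simp: mdeg_add)

lemma hom_single: "homogeneous (mdeg m) (sg m c)"
  by (simp add: homogeneous_iff lookup_single when_def)

lemma lookup_hcomp: "lk (hcomp d p) m = (if mdeg m = d then lk p m else 0)"
proof -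
  let ?S = "{m\<in>ks p. mdeg m = d}"
  have fin: "finite ?S" by simp
  have "lk (hcomp d p) m = (\<Sum>u\<in>?S. if u = m then lk p u else 0)"
    unfolding hcomp_def lookup_sum lookup_single when_def by (rule sum.cong) auto
  also have "\<dots> = (if m \<in> ?S then lk p m else 0)" using fin by (rule sum.delta)
  finally show ?thesis by (auto simp: in_keys_iff)
qed

lemma hcomp_add: "hcomp d (p + q) = hcomp d p + hcomp d q"
  by (rule poly_mapping_eqI) (simp add: lookup_hcomp lookup_add)

lemma hcomp_diff: "hcomp d (p - q) = hcomp d p - hcomp d q"
  by (rule poly_mapping_eqI) (simp add: lookup_hcomp lookup_minus)

lemma hcomp_psmult: "hcomp d (psmult c p) = psmult c (hcomp d p)"
  by (rule poly_mapping_eqI) (simp add: lookup_hcomp lookup_psmult)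

lemma hcomp_hom: "homogeneous d p \<Longrightarrow> hcomp d p = p"
  by (rule poly_mapping_eqI) (auto simp: lookup_hcomp homogeneous_iff)

lemma hcomp_single_other: "mdeg m \<noteq> d \<Longrightarrow> hcomp d (sg m c) = 0"
  by (rule poly_mapping_eqI) (auto simp: lookup_hcomp lookup_single when_def)

lemma hcomp_0[simp]: "hcomp d 0 = 0"
  by (rule poly_mapping_eqI) (simp add: lookup_hcomp)

lemma psmult_add: "psmult c (p + q) = psmult c p + psmult c q"
  by (simp add: psmult_def distrib_left)

lemma psmult_uminus: "psmult c (- p) = - psmult c p"
  by (simp add: psmult_def)

lemma psmult_assoc_mult: "psmult c (p * q) = p * psmult c q"
  by (simp add: psmult_def mult.left_commute)

section \<open>Ideals\<close>

lemma ideal_add: "is_ideal I \<Longrightarrow> p \<in> I \<Longrightarrow> q \<in> I \<Longrightarrow> p + q \<in> I"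
  by (simp add: is_ideal_def)
lemma ideal_mult: "is_ideal I \<Longrightarrow> p \<in> I \<Longrightarrow> f * p \<in> I"
  by (simp add: is_ideal_def)
lemma ideal_mult_right: "is_ideal I \<Longrightarrow> p \<in> I \<Longrightarrow> p * f \<in> I"
  by (metis ideal_mult mult.commute)
lemma ideal_0: "is_ideal I \<Longrightarrow> 0 \<in> I"
  by (simp add: is_ideal_def)
lemma ideal_uminus: "is_ideal I \<Longrightarrow> p \<in> I \<Longrightarrow> - p \<in> I"
  by (metis ideal_mult mult_minus1)
lemma ideal_diff: "is_ideal I \<Longrightarrow> p \<in> I \<Longrightarrow> q \<in> I \<Longrightarrow> p - q \<in> I"
  by (metis ideal_add ideal_uminus diff_conv_add_uminus)
lemma ideal_psmult: "is_ideal I \<Longrightarrow> p \<in> I \<Longrightarrow> psmult c p \<in> I"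
  by (simp add: psmult_def ideal_mult)

lemma is_ideal_gen: "is_ideal (ideal_gen S)"
  unfolding ideal_gen_def is_ideal_def by auto

lemma ideal_gen_sub: "S \<subseteq> ideal_gen S"
  unfolding ideal_gen_def by auto

lemma ideal_gen_least: "is_ideal K \<Longrightarrow> S \<subseteq> K \<Longrightarrow> ideal_gen S \<subseteq> K"
  unfolding ideal_gen_def by auto

section \<open>Functionals\<close>

definition theta :: "(('v \<Rightarrow>\<^sub>0 nat) \<Rightarrow> 'k) \<Rightarrow> ('v, 'k::comm_ring_1) mpoly \<Rightarrow> 'k" where
  "theta c p = (\<Sum>m\<in>ks p. lk p m * c m)"

lemma theta_superset: "finite S \<Longrightarrow> ks p \<subseteq> S \<Longrightarrow> theta c p = (\<Sum>m\<in>S. lk p m * c m)"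
  unfolding theta_def by (rule sum.mono_neutral_left) (auto simp: in_keys_iff)

lemma theta_add: "theta c (p + q) = theta c p + theta c q"
proof -
  let ?S = "ks p \<union> ks q"
  have "ks (p + q) \<subseteq> ?S" by (rule keys_add)
  hence "theta c (p + q) = (\<Sum>m\<in>?S. lk (p+q) m * c m)" by (intro theta_superset) auto
  also have "\<dots> = (\<Sum>m\<in>?S. lk p m * c m) + (\<Sum>m\<in>?S. lk q m * c m)"
    by (simp add: lookup_add sum.distrib distrib_right)
  also have "\<dots> = theta c p + theta c q"
    by (subst (1 2) theta_superset[of ?S]) auto
  finally show ?thesis .
qed

lemma theta_zero[simp]: "theta c 0 = 0"
  by (simp add: theta_def)

lemma theta_uminus: "theta c (- p) = - theta c p"
  by (simp add: theta_def sum_negf)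

lemma theta_diff: "theta c (p - q) = theta c p - theta c q"
  by (metis diff_conv_add_uminus theta_add theta_uminus)

lemma theta_sum: "theta c (\<Sum>i\<in>A. f i) = (\<Sum>i\<in>A. theta c (f i))"
  by (induct A rule: infinite_finite_induct) (auto simp: theta_add)

lemma theta_single: "theta c (sg m a) = a * c m"
  by (cases "a = 0") (auto simp: theta_def)

lemma theta_psmult: "theta c (psmult a p) = a * theta c p"
proof -
  have "ks (psmult a p) \<subseteq> ks p" by (auto simp: in_keys_iff lookup_psmult)
  hence "theta c (psmult a p) = (\<Sum>m\<in>ks p. lk (psmult a p) m * c m)"
    by (intro theta_superset) auto
  thus ?thesis by (simp add: theta_def lookup_psmult sum_distrib_left mult.assoc)
qed

lemma mult_expand: "(f::('v,'k::comm_ring_1) mpoly) * p = (\<Sum>u\<in>ks f. \<Sum>v\<in>ks p. sg (u + v) (lk f u * lk p v))"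
proof -
  have e1: "(\<Sum>u\<in>ks f. sg u (lk f u)) = f" by (rule mpoly_expand[symmetric])
  have e2: "(\<Sum>v\<in>ks p. sg v (lk p v)) = p" by (rule mpoly_expand[symmetric])
  have "(\<Sum>u\<in>ks f. \<Sum>v\<in>ks p. sg (u + v) (lk f u * lk p v))
      = (\<Sum>u\<in>ks f. \<Sum>v\<in>ks p. sg u (lk f u) * sg v (lk p v))"
    by (simp only: mult_single)
  also have "\<dots> = (\<Sum>u\<in>ks f. sg u (lk f u)) * (\<Sum>v\<in>ks p. sg v (lk p v))"
    by (rule sum_product[symmetric])
  also have "\<dots> = f * p" by (simp only: e1 e2)
  finally show ?thesis by (rule sym)
qed

lemma theta_mult: "theta c (f * p) = theta (\<lambda>u. theta (\<lambda>b. c (u + b)) p) f"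
proof -
  have "theta c (f * p) = (\<Sum>u\<in>ks f. \<Sum>v\<in>ks p. lk f u * lk p v * c (u + v))"
    by (subst mult_expand) (simp only: theta_sum theta_single)
  also have "\<dots> = theta (\<lambda>u. theta (\<lambda>b. c (u + b)) p) f"
    by (simp add: theta_def sum_distrib_left mult.assoc)
  finally show ?thesis .
qed

definition Ann :: "(('v \<Rightarrow>\<^sub>0 nat) \<Rightarrow> 'k) \<Rightarrow> ('v, 'k::comm_ring_1) mpoly set" where
  "Ann c = {p. \<forall>a. theta (\<lambda>b. c (a + b)) p = 0}"

lemma Ann_ideal: "is_ideal (Ann c)"
  unfolding is_ideal_def Ann_def
proof (intro conjI ballI allI; clarsimp?)
  fix p q a assume "\<forall>a. theta (\<lambda>b. c (a + b)) p = 0" "\<forall>a. theta (\<lambda>b. c (a + b)) q = 0"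
  thus "theta (\<lambda>b. c (a + b)) (p + q) = 0" by (simp add: theta_add)
next
  fix f p a assume h: "\<forall>a. theta (\<lambda>b. c (a + b)) p = 0"
  have "theta (\<lambda>b. c (a + b)) (f * p) = theta (\<lambda>u. theta (\<lambda>b. c ((a + u) + b)) p) f"
    by (simp add: theta_mult add.assoc)
  also have "\<dots> = 0" using h by (simp add: theta_def)
  finally show "theta (\<lambda>b. c (a + b)) (f * p) = 0" .
qed

lemma Ann_theta: "p \<in> Ann c \<Longrightarrow> theta c p = 0"
proof -
  assume "p \<in> Ann c"
  hence "theta (\<lambda>b. c (0 + b)) p = 0" unfolding Ann_def by blast
  thus ?thesis by simp
qed

lemma ideal_sub_Ann:
  assumes "is_ideal I" "\<forall>p\<in>I. theta c p = 0"
  shows "I \<subseteq> Ann c"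
proof
  fix p assume p: "p \<in> I"
  have "theta (\<lambda>b. c (a + b)) p = 0" for a
  proof -
    have "theta c (sg a 1 * p) = theta (\<lambda>b. c (a + b)) p"
      by (simp add: theta_mult theta_single)
    moreover have "sg a 1 * p \<in> I" using assms(1) p by (rule ideal_mult)
    ultimately show ?thesis using assms(2) by simp
  qed
  thus "p \<in> Ann c" unfolding Ann_def by simp
qed


section \<open>Tensor\<close>

definition xpart :: "('a + 'b \<Rightarrow>\<^sub>0 nat) \<Rightarrow> ('a \<Rightarrow>\<^sub>0 nat)" where
  "xpart m = Poly_Mapping.map_key Inl m"
definition ypart :: "('a + 'b \<Rightarrow>\<^sub>0 nat) \<Rightarrow> ('b \<Rightarrow>\<^sub>0 nat)" where
  "ypart m = Poly_Mapping.map_key Inr m"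

lemma lookup_xpart[simp]: "lk (xpart m) a = lk m (Inl a)"
  unfolding xpart_def by (simp add: map_key.rep_eq inj_def)
lemma lookup_ypart[simp]: "lk (ypart m) b = lk m (Inr b)"
  unfolding ypart_def by (simp add: map_key.rep_eq inj_def)

lemma lookup_mon_l_Inl[simp]: "lk (mon_l u :: ('a + 'b \<Rightarrow>\<^sub>0 nat)) (Inl a) = lk u a"
  unfolding mon_l_def lookup_sum lookup_single when_def
  by (cases "a \<in> ks u") (auto simp: in_keys_iff)
lemma lookup_mon_l_Inr[simp]: "lk (mon_l u :: ('a + 'b \<Rightarrow>\<^sub>0 nat)) (Inr b) = 0"
  unfolding mon_l_def lookup_sum lookup_single when_def by simp
lemma lookup_mon_r_Inr[simp]: "lk (mon_r v :: ('a + 'b \<Rightarrow>\<^sub>0 nat)) (Inr b) = lk v b"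
  unfolding mon_r_def lookup_sum lookup_single when_def
  by (cases "b \<in> ks v") (auto simp: in_keys_iff)
lemma lookup_mon_r_Inl[simp]: "lk (mon_r v :: ('a + 'b \<Rightarrow>\<^sub>0 nat)) (Inl a) = 0"
  unfolding mon_r_def lookup_sum lookup_single when_def by simp

lemma xpart_mon_l[simp]: "xpart (mon_l u) = u"
  by (rule poly_mapping_eqI) simp
lemma ypart_mon_l[simp]: "ypart (mon_l u) = 0"
  by (rule poly_mapping_eqI) simp
lemma xpart_mon_r[simp]: "xpart (mon_r v) = 0"
  by (rule poly_mapping_eqI) simp
lemma ypart_mon_r[simp]: "ypart (mon_r v) = v"
  by (rule poly_mapping_eqI) simp
lemma xpart_add[simp]: "xpart (m + n) = xpart m + xpart n"
  by (rule poly_mapping_eqI) (simp add: lookup_add)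
lemma ypart_add[simp]: "ypart (m + n) = ypart m + ypart n"
  by (rule poly_mapping_eqI) (simp add: lookup_add)
lemma xpart_0[simp]: "xpart 0 = 0"
  by (rule poly_mapping_eqI) simp
lemma ypart_0[simp]: "ypart 0 = 0"
  by (rule poly_mapping_eqI) simp

lemma mon_split: "m = mon_l (xpart m) + mon_r (ypart m)"
proof (rule poly_mapping_eqI)
  fix k show "lk m k = lk (mon_l (xpart m) + mon_r (ypart m)) k"
    by (cases k) (simp_all add: lookup_add)
qed

lemma mon_l_add: "mon_l (u + v) = (mon_l u + mon_l v :: ('a + 'b \<Rightarrow>\<^sub>0 nat))"
proof (rule poly_mapping_eqI)
  fix k show "lk (mon_l (u + v) :: ('a + 'b \<Rightarrow>\<^sub>0 nat)) k = lk (mon_l u + mon_l v) k"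
    by (cases k) (simp_all add: lookup_add)
qed
lemma mon_r_add: "mon_r (u + v) = (mon_r u + mon_r v :: ('a + 'b \<Rightarrow>\<^sub>0 nat))"
proof (rule poly_mapping_eqI)
  fix k show "lk (mon_r (u + v) :: ('a + 'b \<Rightarrow>\<^sub>0 nat)) k = lk (mon_r u + mon_r v) k"
    by (cases k) (simp_all add: lookup_add)
qed

lemma mon_l_0[simp]: "mon_l 0 = 0"
  by (simp add: mon_l_def)
lemma mon_r_0[simp]: "mon_r 0 = 0"
  by (simp add: mon_r_def)

lemma mon_l_eq_iff: "(mon_l u = (m :: ('a + 'b \<Rightarrow>\<^sub>0 nat))) \<longleftrightarrow> (ypart m = 0 \<and> u = xpart m)"
  by (metis add.right_neutral mon_r_0 mon_split xpart_mon_l ypart_mon_l)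
lemma mon_r_eq_iff: "(mon_r v = (m :: ('a + 'b \<Rightarrow>\<^sub>0 nat))) \<longleftrightarrow> (xpart m = 0 \<and> v = ypart m)"
  by (metis add.left_neutral mon_l_0 mon_split xpart_mon_r ypart_mon_r)

lemma mdeg_split: "mdeg (m :: ('a + 'b \<Rightarrow>\<^sub>0 nat)) = mdeg (xpart m) + mdeg (ypart m)"
proof -
  let ?A = "Inl ` ks (xpart m) :: ('a + 'b) set" and ?B = "Inr ` ks (ypart m) :: ('a + 'b) set"
  have sub: "ks m \<subseteq> ?A \<union> ?B"
  proof
    fix k assume "k \<in> ks m"
    thus "k \<in> ?A \<union> ?B" by (cases k) (auto simp: in_keys_iff)
  qed
  have "mdeg m = (\<Sum>k\<in>?A \<union> ?B. lk m k)" using sub by (intro mdeg_superset) auto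
  also have "\<dots> = (\<Sum>k\<in>?A. lk m k) + (\<Sum>k\<in>?B. lk m k)"
    by (rule sum.union_disjoint) auto
  also have "(\<Sum>k\<in>?A. lk m k) = mdeg (xpart m)"
    by (simp add: sum.reindex mdeg_def)
  also have "(\<Sum>k\<in>?B. lk m k) = mdeg (ypart m)"
    by (simp add: sum.reindex mdeg_def)
  finally show ?thesis .
qed

lemma mdeg_mon_l[simp]: "mdeg (mon_l u :: ('a + 'b \<Rightarrow>\<^sub>0 nat)) = mdeg u"
  by (simp add: mdeg_split[of "mon_l u"])
lemma mdeg_mon_r[simp]: "mdeg (mon_r v :: ('a + 'b \<Rightarrow>\<^sub>0 nat)) = mdeg v"
  by (simp add: mdeg_split[of "mon_r v"])

lemma lookup_emb_l: "lk (emb_l p :: ('a + 'b, 'k::comm_monoid_add) mpoly) m = (if ypart m = 0 then lk p (xpart m) else 0)"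
proof -
  have "lk (emb_l p :: ('a + 'b, 'k) mpoly) m = (\<Sum>u\<in>ks p. if u = xpart m \<and> ypart m = 0 then lk p u else 0)"
    unfolding emb_l_def lookup_sum lookup_single when_def
    by (rule sum.cong) (auto simp: mon_l_eq_iff)
  also have "\<dots> = (if ypart m = 0 then lk p (xpart m) else 0)"
    by (cases "ypart m = 0") (auto simp: sum.delta' in_keys_iff)
  finally show ?thesis .
qed
lemma lookup_emb_r: "lk (emb_r p :: ('a + 'b, 'k::comm_monoid_add) mpoly) m = (if xpart m = 0 then lk p (ypart m) else 0)"
proof -
  have "lk (emb_r p :: ('a + 'b, 'k) mpoly) m = (\<Sum>u\<in>ks p. if u = ypart m \<and> xpart m = 0 then lk p u else 0)"
    unfolding emb_r_def lookup_sum lookup_single when_def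
    by (rule sum.cong) (auto simp: mon_r_eq_iff)
  also have "\<dots> = (if xpart m = 0 then lk p (ypart m) else 0)"
    by (cases "xpart m = 0") (auto simp: sum.delta' in_keys_iff)
  finally show ?thesis .
qed

lemma emb_l_add: "emb_l (p + q) = (emb_l p + emb_l q :: ('a + 'b, 'k::comm_monoid_add) mpoly)"
  by (rule poly_mapping_eqI) (simp add: lookup_emb_l lookup_add)
lemma emb_r_add: "emb_r (p + q) = (emb_r p + emb_r q :: ('a + 'b, 'k::comm_monoid_add) mpoly)"
  by (rule poly_mapping_eqI) (simp add: lookup_emb_r lookup_add)
lemma emb_l_0[simp]: "emb_l 0 = 0"
  by (simp add: emb_l_def)
lemma emb_r_0[simp]: "emb_r 0 = 0"
  by (simp add: emb_r_def)
lemma emb_l_sum: "emb_l (\<Sum>i\<in>A. f i) = (\<Sum>i\<in>A. emb_l (f i) :: ('a + 'b, 'k::comm_monoid_add) mpoly)"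
  by (induct A rule: infinite_finite_induct) (auto simp: emb_l_add)
lemma emb_r_sum: "emb_r (\<Sum>i\<in>A. f i) = (\<Sum>i\<in>A. emb_r (f i) :: ('a + 'b, 'k::comm_monoid_add) mpoly)"
  by (induct A rule: infinite_finite_induct) (auto simp: emb_r_add)
lemma emb_l_single: "emb_l (sg u a) = (sg (mon_l u) a :: ('a + 'b, 'k::comm_monoid_add) mpoly)"
  by (rule poly_mapping_eqI) (auto simp: lookup_emb_l lookup_single when_def mon_l_eq_iff)
lemma emb_r_single: "emb_r (sg u a) = (sg (mon_r u) a :: ('a + 'b, 'k::comm_monoid_add) mpoly)"
  by (rule poly_mapping_eqI) (auto simp: lookup_emb_r lookup_single when_def mon_r_eq_iff)

lemma emb_l_mult: "emb_l (p * q) = (emb_l p * emb_l q :: ('a + 'b, 'k::comm_ring_1) mpoly)"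
proof -
  have "emb_l p * emb_l q = (\<Sum>u\<in>ks p. emb_l (sg u (lk p u))) * (\<Sum>v\<in>ks q. emb_l (sg v (lk q v)) :: ('a + 'b, 'k) mpoly)"
    by (simp only: emb_l_sum[symmetric] mpoly_expand[symmetric])
  also have "\<dots> = (\<Sum>u\<in>ks p. \<Sum>v\<in>ks q. emb_l (sg u (lk p u)) * emb_l (sg v (lk q v)) :: ('a + 'b, 'k) mpoly)"
    by (rule sum_product)
  also have "\<dots> = (\<Sum>u\<in>ks p. \<Sum>v\<in>ks q. emb_l (sg (u + v) (lk p u * lk q v)) :: ('a + 'b, 'k) mpoly)"
    by (simp only: emb_l_single mult_single mon_l_add)
  also have "\<dots> = emb_l (p * q)"
    by (simp only: emb_l_sum[symmetric] mult_expand[symmetric])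
  finally show ?thesis by (rule sym)
qed
lemma emb_r_mult: "emb_r (p * q) = (emb_r p * emb_r q :: ('a + 'b, 'k::comm_ring_1) mpoly)"
proof -
  have "emb_r p * emb_r q = (\<Sum>u\<in>ks p. emb_r (sg u (lk p u))) * (\<Sum>v\<in>ks q. emb_r (sg v (lk q v)) :: ('a + 'b, 'k) mpoly)"
    by (simp only: emb_r_sum[symmetric] mpoly_expand[symmetric])
  also have "\<dots> = (\<Sum>u\<in>ks p. \<Sum>v\<in>ks q. emb_r (sg u (lk p u)) * emb_r (sg v (lk q v)) :: ('a + 'b, 'k) mpoly)"
    by (rule sum_product)
  also have "\<dots> = (\<Sum>u\<in>ks p. \<Sum>v\<in>ks q. emb_r (sg (u + v) (lk p u * lk q v)) :: ('a + 'b, 'k) mpoly)"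
    by (simp only: emb_r_single mult_single mon_r_add)
  also have "\<dots> = emb_r (p * q)"
    by (simp only: emb_r_sum[symmetric] mult_expand[symmetric])
  finally show ?thesis by (rule sym)
qed

lemma theta_emb_l: "theta c (emb_l p :: ('a + 'b, 'k::comm_ring_1) mpoly) = (\<Sum>u\<in>ks p. lk p u * c (mon_l u))"
  unfolding emb_l_def by (simp add: theta_sum theta_single)
lemma theta_emb_r: "theta c (emb_r p :: ('a + 'b, 'k::comm_ring_1) mpoly) = (\<Sum>u\<in>ks p. lk p u * c (mon_r u))"
  unfolding emb_r_def by (simp add: theta_sum theta_single)

lemma hom_emb_l: "homogeneous d p \<Longrightarrow> homogeneous d (emb_l p :: ('a + 'b, 'k::comm_monoid_add) mpoly)"
  unfolding homogeneous_iff lookup_emb_l by (auto simp: mdeg_split split: if_splits)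
lemma hom_emb_r: "homogeneous d p \<Longrightarrow> homogeneous d (emb_r p :: ('a + 'b, 'k::comm_monoid_add) mpoly)"
  unfolding homogeneous_iff lookup_emb_r by (auto simp: mdeg_split split: if_splits)

definition restr_l :: "('a + 'b, 'k::zero) mpoly \<Rightarrow> ('a, 'k) mpoly" where
  "restr_l p = Poly_Mapping.map_key mon_l p"
definition restr_r :: "('a + 'b, 'k::zero) mpoly \<Rightarrow> ('b, 'k) mpoly" where
  "restr_r p = Poly_Mapping.map_key mon_r p"

lemma inj_mon_l: "inj (mon_l :: ('a \<Rightarrow>\<^sub>0 nat) \<Rightarrow> ('a + 'b \<Rightarrow>\<^sub>0 nat))"
  by (metis injI xpart_mon_l)
lemma inj_mon_r: "inj (mon_r :: ('b \<Rightarrow>\<^sub>0 nat) \<Rightarrow> ('a + 'b \<Rightarrow>\<^sub>0 nat))"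
  by (metis injI ypart_mon_r)

lemma lookup_restr_l: "lk (restr_l (p :: ('a + 'b, 'k::zero) mpoly)) u = lk p (mon_l u)"
  unfolding restr_l_def by (simp add: map_key.rep_eq[OF inj_mon_l])
lemma lookup_restr_r: "lk (restr_r (p :: ('a + 'b, 'k::zero) mpoly)) u = lk p (mon_r u)"
  unfolding restr_r_def by (simp add: map_key.rep_eq[OF inj_mon_r])

lemma hom_restr_l: "homogeneous d (p :: ('a + 'b, 'k::zero) mpoly) \<Longrightarrow> homogeneous d (restr_l p)"
  unfolding homogeneous_iff lookup_restr_l by (metis mdeg_mon_l)
lemma hom_restr_r: "homogeneous d (p :: ('a + 'b, 'k::zero) mpoly) \<Longrightarrow> homogeneous d (restr_r p)"
  unfolding homogeneous_iff lookup_restr_r by (metis mdeg_mon_r)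

lemma split_linear:
  assumes "homogeneous 1 (l :: ('a + 'b, 'k::comm_monoid_add) mpoly)"
  shows "l = emb_l (restr_l l) + emb_r (restr_r l)"
proof (rule poly_mapping_eqI)
  fix m :: "'a + 'b \<Rightarrow>\<^sub>0 nat"
  have l0: "lk l n = 0" if "mdeg n \<noteq> 1" for n using assms that by (auto simp: homogeneous_iff)
  have ml: "m = mon_l (xpart m)" if "ypart m = 0" using mon_split[of m] that by simp
  have mr: "m = mon_r (ypart m)" if "xpart m = 0" using mon_split[of m] that by simp
  show "lk l m = lk (emb_l (restr_l l) + emb_r (restr_r l)) m"
  proof (cases "xpart m = 0"; cases "ypart m = 0")
    assume "xpart m = 0" "ypart m = 0"
    hence "m = 0" using mon_split[of m] by simp
    thus ?thesis using l0[of 0] by (simp add: lookup_add lookup_emb_l lookup_emb_r lookup_restr_l lookup_restr_r)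
  next
    assume a: "xpart m = 0" "ypart m \<noteq> 0"
    thus ?thesis using mr by (simp add: lookup_add lookup_emb_l lookup_emb_r lookup_restr_l lookup_restr_r)
  next
    assume a: "xpart m \<noteq> 0" "ypart m = 0"
    thus ?thesis using ml by (simp add: lookup_add lookup_emb_l lookup_emb_r lookup_restr_l lookup_restr_r)
  next
    assume a: "xpart m \<noteq> 0" "ypart m \<noteq> 0"
    hence "mdeg (xpart m) \<noteq> 0" "mdeg (ypart m) \<noteq> 0" by (simp_all add: mdeg_eq_0)
    hence "mdeg m \<noteq> 1" by (simp add: mdeg_split)
    thus ?thesis using a l0 by (simp add: lookup_add lookup_emb_l lookup_emb_r)
  qed
qed

definition tc :: "(('a \<Rightarrow>\<^sub>0 nat) \<Rightarrow> 'k::comm_ring_1) \<Rightarrow> (('b \<Rightarrow>\<^sub>0 nat) \<Rightarrow> 'k) \<Rightarrow> ('a + 'b \<Rightarrow>\<^sub>0 nat) \<Rightarrow> 'k" where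
  "tc c1 c2 m = c1 (xpart m) * c2 (ypart m)"

lemma theta_tc_emb_l:
  "theta (\<lambda>b. tc c1 c2 (a + b)) (emb_l p) = c2 (ypart a) * theta (\<lambda>b. c1 (xpart a + b)) p"
  by (simp only: theta_emb_l) (simp add: tc_def theta_def sum_distrib_left mult_ac)
lemma theta_tc_emb_r:
  "theta (\<lambda>b. tc c1 c2 (a + b)) (emb_r p) = c1 (xpart a) * theta (\<lambda>b. c2 (ypart a + b)) p"
  by (simp only: theta_emb_r) (simp add: tc_def theta_def sum_distrib_left mult_ac)

lemma emb_l_Ann: "p \<in> Ann c1 \<Longrightarrow> emb_l p \<in> Ann (tc c1 c2)"
  unfolding Ann_def by (simp add: theta_tc_emb_l)
lemma emb_r_Ann: "p \<in> Ann c2 \<Longrightarrow> emb_r p \<in> Ann (tc c1 c2)"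
  unfolding Ann_def by (simp add: theta_tc_emb_r)

lemma tensor_sub_Ann:
  assumes "I \<subseteq> Ann c1" "J \<subseteq> Ann c2"
  shows "tensor_ideal I J \<subseteq> Ann (tc c1 c2)"
  unfolding tensor_ideal_def
  by (rule ideal_gen_least[OF Ann_ideal]) (use assms emb_l_Ann emb_r_Ann in blast)

lemma theta_tc_prod: "theta (tc c1 c2) (emb_l p * emb_r q) = theta c1 p * theta c2 q"
proof -
  have "theta (tc c1 c2) (emb_l p * emb_r q) = theta (\<lambda>u. theta (\<lambda>b. tc c1 c2 (u + b)) (emb_r q)) (emb_l p)"
    by (rule theta_mult)
  also have "\<dots> = theta (\<lambda>u. c1 (xpart u) * theta (\<lambda>b. c2 (ypart u + b)) q) (emb_l p)"
    by (simp only: theta_tc_emb_r)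
  also have "\<dots> = (\<Sum>u\<in>ks p. lk p u * (c1 u * theta c2 q))"
    by (simp add: theta_emb_l)
  also have "\<dots> = theta c1 p * theta c2 q"
    by (simp add: theta_def sum_distrib_right mult_ac)
  finally show ?thesis .
qed

lemma theta_tc_linear:
  "theta (\<lambda>b. tc c1 c2 (u + b)) (emb_l l1 + emb_r l2) =
     c2 (ypart u) * theta (\<lambda>b. c1 (xpart u + b)) l1 + c1 (xpart u) * theta (\<lambda>b. c2 (ypart u + b)) l2"
  by (simp add: theta_add theta_tc_emb_l theta_tc_emb_r)

context vector_space begin

lemma mu_zero:
  assumes sc: "\<And>c x. \<mu> (c *s x) = c *s \<mu> x"
  shows "\<mu> 0 = 0"
  using sc[of 0 0] by simp

lemma span_image_sub:
  assumes add: "\<And>x y. \<mu> (x + y) = \<mu> x + \<mu> y" and sc: "\<And>c x. \<mu> (c *s x) = c *s \<mu> x"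
  shows "x \<in> span C \<Longrightarrow> \<mu> x \<in> span (\<mu> ` C)"
proof (induct rule: span_induct_alt)
  case base thus ?case using mu_zero[OF sc] by (simp add: span_zero)
next
  case (step c x y)
  thus ?case by (simp add: add sc span_add span_scale span_base)
qed

lemma indep_union:
  assumes "finite S" "independent S" "independent T"
    "\<And>x. x \<in> span S \<Longrightarrow> x \<in> span T \<Longrightarrow> x = 0"
  shows "independent (S \<union> T)"
  using assms
proof (induct S rule: finite_induct)
  case empty thus ?case by simp
next
  case (insert a S)
  have iS: "independent S" using insert.prems(1) by (rule independent_mono) auto
  have aS: "a \<notin> span S" using insert.prems(1) insert.hyps(2) by (simp add: independent_insert)
  have IH: "independent (S \<union> T)"
    using insert.hyps(3)[OF iS insert.prems(2)] insert.prems(3) span_mono[of S "insert a S"] by blast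
  have "a \<notin> span (S \<union> T)"
  proof
    assume "a \<in> span (S \<union> T)"
    then obtain x y where xy: "a = x + y" "x \<in> span S" "y \<in> span T" by (auto simp: span_Un)
    have "y = a - x" using xy by simp
    moreover have "a - x \<in> span (insert a S)"
      using xy(2) span_mono[of S "insert a S"] by (intro span_diff) (auto intro: span_base)
    ultimately have "y = 0" using insert.prems(3) xy(3) by metis
    hence "a \<in> span S" using xy by simp
    thus False using aS by simp
  qed
  hence "independent (insert a (S \<union> T))" using IH by (rule independent_insertI)
  thus ?case by simp
qed

lemma span_inter_zero:
  assumes "independent (A \<union> B)" "A \<inter> B = {}" "finite A" "finite B" "x \<in> span A" "x \<in> span B"
  shows "x = 0"
proof -
  obtain u where u: "x = (\<Sum>v\<in>A. u v *s v)" using assms(3,5) by (auto simp: span_finite)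
  obtain w where w: "x = (\<Sum>v\<in>B. w v *s v)" using assms(4,6) by (auto simp: span_finite)
  define f where "f v = (if v \<in> A then u v else - w v)" for v
  have s: "(\<Sum>v\<in>A \<union> B. f v *s v) = (\<Sum>v\<in>A. f v *s v) + (\<Sum>v\<in>B. f v *s v)"
    by (rule sum.union_disjoint) (use assms in auto)
  have sA: "(\<Sum>v\<in>A. f v *s v) = x" unfolding u f_def by (rule sum.cong) auto
  have "(\<Sum>v\<in>B. f v *s v) = (\<Sum>v\<in>B. - (w v *s v))"
    unfolding f_def using assms(2) by (intro sum.cong) (auto simp: scale_minus_left)
  hence sB: "(\<Sum>v\<in>B. f v *s v) = - x" unfolding w by (simp add: sum_negf)
  have z: "(\<Sum>v\<in>A \<union> B. f v *s v) = 0" using s sA sB by simp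
  have "\<forall>v\<in>A. u v = 0"
  proof
    fix v assume "v \<in> A"
    hence "f v = 0" using independentD[OF assms(1) _ subset_refl z] assms(3,4) by auto
    thus "u v = 0" using \<open>v \<in> A\<close> by (simp add: f_def)
  qed
  thus ?thesis unfolding u by simp
qed

lemma dim_le_union:
  assumes "V \<subseteq> span (U \<union> D)" "finite D" "U \<subseteq> span F" "finite F"
  shows "dim V \<le> dim U + card D"
proof -
  obtain B where B: "B \<subseteq> U" "independent B" "U \<subseteq> span B" "card B = dim U"
    by (rule basis_exists)
  have fB: "finite B" using independent_span_bound[OF assms(4) B(2)] B(1) assms(3) by auto
  have "U \<union> D \<subseteq> span (B \<union> D)"
    using B(3) span_mono[of B "B \<union> D"] span_superset[of "B \<union> D"] by blast
  hence "span (U \<union> D) \<subseteq> span (B \<union> D)" by (rule span_minimal) (rule subspace_span)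
  hence "V \<subseteq> span (B \<union> D)" using assms(1) by blast
  hence "dim V \<le> card (B \<union> D)" using fB assms(2) by (intro dim_le_card) auto
  also have "\<dots> \<le> card B + card D" by (rule card_Un_le)
  finally show ?thesis using B(4) by simp
qed

lemma card_le_dim:
  assumes "independent T" "T \<subseteq> V" "V \<subseteq> span F" "finite F"
  shows "finite T \<and> card T \<le> dim V"
proof -
  obtain B where B: "B \<subseteq> V" "independent B" "V \<subseteq> span B" "card B = dim V"
    by (rule basis_exists)
  have fB: "finite B" using independent_span_bound[OF assms(4) B(2)] B(1) assms(3) by auto
  have "T \<subseteq> span B" using assms(2) B(3) by blast
  from independent_span_bound[OF fB assms(1) this] B(4) show ?thesis by simp
qed

lemma complement_exists:
  assumes "U \<subseteq> V" "V \<subseteq> span F" "finite F"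
  obtains B C where "B \<subseteq> U" "U \<subseteq> span B" "independent (B \<union> C)" "B \<inter> C = {}" "C \<subseteq> V"
    "V \<subseteq> span (B \<union> C)" "card B = dim U" "card C = dim V - dim U" "finite B" "finite C"
proof -
  obtain B where B: "B \<subseteq> U" "independent B" "U \<subseteq> span B" "card B = dim U"
    by (rule basis_exists)
  obtain B' where B': "B \<subseteq> B'" "B' \<subseteq> V" "independent B'" "V \<subseteq> span B'"
    using maximal_independent_subset_extend[of B V] B(1,2) assms(1) by blast
  have cB': "card B' = dim V" using basis_card_eq_dim[OF B'(2,4,3)] .
  have fB': "finite B'" using independent_span_bound[OF assms(3) B'(3)] B'(2) assms(2) by auto
  have fB: "finite B" using B'(1) fB' finite_subset by blast
  let ?C = "B' - B"
  have un: "B \<union> ?C = B'" using B'(1) by blast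
  have cC: "card ?C = dim V - dim U" using card_Diff_subset[OF fB B'(1)] cB' B(4) by simp
  show ?thesis
    by (rule that[of B ?C]) (use B B' fB fB' un cC in auto)
qed

lemma inj_dim:
  assumes F1: "V1 \<subseteq> span F1" "finite F1" and F2: "V2 \<subseteq> span F2" "finite F2"
    and sub: "U1 \<subseteq> V1" "U2 \<subseteq> V2" "subspace V1" "subspace U2"
    and add: "\<And>x y. \<mu> (x + y) = \<mu> x + \<mu> y" and sc: "\<And>c x. \<mu> (c *s x) = c *s \<mu> x"
    and maps: "\<mu> ` V1 \<subseteq> V2"
    and inj: "\<And>x. x \<in> V1 \<Longrightarrow> \<mu> x \<in> U2 \<Longrightarrow> x \<in> U1"
  shows "dim V1 - dim U1 \<le> dim V2 - dim U2"
proof -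
  obtain B1 C where BC: "B1 \<subseteq> U1" "U1 \<subseteq> span B1" "independent (B1 \<union> C)" "B1 \<inter> C = {}" "C \<subseteq> V1"
    "V1 \<subseteq> span (B1 \<union> C)" "card B1 = dim U1" "card C = dim V1 - dim U1" "finite B1" "finite C"
    using complement_exists[OF sub(1) F1] by blast
  obtain B2 where B2: "B2 \<subseteq> U2" "independent B2" "U2 \<subseteq> span B2" "card B2 = dim U2"
    by (rule basis_exists)
  have fB2: "finite B2" using independent_span_bound[OF F2(2) B2(2)] B2(1) sub(2) F2(1) by auto
  have spC: "span C \<subseteq> V1" using BC(5) sub(3) by (intro span_minimal)
  have key: "x = 0" if "x \<in> span C" "\<mu> x \<in> U2" for x
  proof -
    have "x \<in> U1" using inj[of x] that spC by blast
    hence "x \<in> span B1" using BC(2) by blast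
    thus ?thesis using span_inter_zero[OF BC(3,4,9,10)] that(1) by blast
  qed
  have mh: "module_hom scale scale \<mu>"
    by (simp add: module_hom_def module_hom_axioms_def add sc module_axioms)
  have mu0: "\<mu> 0 = 0" by (rule mu_zero[OF sc])
  have mudiff: "\<mu> (x - y) = \<mu> x - \<mu> y" for x y
    using add[of "x - y" y] by (simp add: algebra_simps)
  have injC: "inj_on \<mu> (span C)"
  proof (rule inj_onI)
    fix x y assume xy: "x \<in> span C" "y \<in> span C" "\<mu> x = \<mu> y"
    have "\<mu> (x - y) \<in> U2" using xy(3) mudiff mu0 subspace_0[OF sub(4)] by simp
    hence "x - y = 0" using key span_diff[OF xy(1,2)] by blast
    thus "x = y" by simp
  qed
  let ?S = "\<mu> ` C"
  have iS: "independent ?S"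
    using module_hom.independent_injective_image[OF mh] BC(3) injC independent_mono by blast
  have spB2: "span B2 \<subseteq> U2" using B2(1) sub(4) by (intro span_minimal)
  have inter: "y = 0" if "y \<in> span ?S" "y \<in> span B2" for y
  proof -
    have "y \<in> \<mu> ` span C" using that(1) module_hom.span_image[OF mh, of C] by simp
    then obtain x where x: "x \<in> span C" "y = \<mu> x" by blast
    hence "x = 0" using key spB2 that(2) by blast
    thus ?thesis using x mu0 by simp
  qed
  have iU: "independent (?S \<union> B2)" using indep_union[OF _ iS B2(2) inter] BC(10) by blast
  have "?S \<union> B2 \<subseteq> V2" using maps BC(5) B2(1) sub(2) by blast
  from card_le_dim[OF iU this F2] have c: "card (?S \<union> B2) \<le> dim V2" by simp
  have disj: "?S \<inter> B2 = {}"
  proof (rule ccontr)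
    assume "?S \<inter> B2 \<noteq> {}"
    then obtain z where "z \<in> ?S" "z \<in> B2" by blast
    hence "z = 0" using inter span_base by blast
    thus False using \<open>z \<in> B2\<close> B2(2) dependent_zero by blast
  qed
  have "card (?S \<union> B2) = card ?S + card B2" using card_Un_disjoint[OF _ fB2 disj] BC(10) by simp
  moreover have "card ?S = card C" using card_image inj_on_subset[OF injC span_superset] by blast
  ultimately have "dim V1 - dim U1 + dim U2 \<le> dim V2" using c BC(8) B2(4) by simp
  thus ?thesis by simp
qed

lemma surj_dim:
  assumes F1: "V1 \<subseteq> span F1" "finite F1" and F2: "V2 \<subseteq> span F2" "finite F2"
    and sub: "U1 \<subseteq> V1" "U2 \<subseteq> V2" "subspace U1" "subspace U2"
    and add: "\<And>x y. \<mu> (x + y) = \<mu> x + \<mu> y" and sc: "\<And>c x. \<mu> (c *s x) = c *s \<mu> x"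
    and mapsU: "\<mu> ` U1 \<subseteq> U2"
    and surj: "\<And>y. y \<in> V2 \<Longrightarrow> \<exists>x\<in>V1. y - \<mu> x \<in> U2"
  shows "dim V2 - dim U2 \<le> dim V1 - dim U1"
proof -
  obtain B1 C where BC: "B1 \<subseteq> U1" "U1 \<subseteq> span B1" "independent (B1 \<union> C)" "B1 \<inter> C = {}" "C \<subseteq> V1"
    "V1 \<subseteq> span (B1 \<union> C)" "card B1 = dim U1" "card C = dim V1 - dim U1" "finite B1" "finite C"
    using complement_exists[OF sub(1) F1] by blast
  have spB1: "span B1 \<subseteq> U1" using BC(1) sub(3) by (intro span_minimal)
  have "V2 \<subseteq> span (U2 \<union> \<mu> ` C)"
  proof
    fix y assume "y \<in> V2"
    then obtain x where x: "x \<in> V1" "y - \<mu> x \<in> U2" using surj by blast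
    then obtain x1 x2 where x12: "x = x1 + x2" "x1 \<in> span B1" "x2 \<in> span C"
      using BC(6) by (auto simp: span_Un)
    have "\<mu> x1 \<in> U2" using mapsU spB1 x12(2) by blast
    have "\<mu> x2 \<in> span (\<mu> ` C)" by (rule span_image_sub[OF add sc x12(3)])
    have "y = (y - \<mu> x) + \<mu> x1 + \<mu> x2" using x12(1) add by simp
    moreover have "y - \<mu> x \<in> span (U2 \<union> \<mu> ` C)" using x(2) by (intro span_base) auto
    moreover have "\<mu> x1 \<in> span (U2 \<union> \<mu> ` C)" using \<open>\<mu> x1 \<in> U2\<close> by (intro span_base) auto
    moreover have "\<mu> x2 \<in> span (U2 \<union> \<mu> ` C)"
      using \<open>\<mu> x2 \<in> span (\<mu> ` C)\<close> span_mono[of "\<mu> ` C" "U2 \<union> \<mu> ` C"] by blast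
    ultimately show "y \<in> span (U2 \<union> \<mu> ` C)" by (metis span_add)
  qed
  hence "dim V2 \<le> dim U2 + card (\<mu> ` C)"
    using sub(2) F2 BC(10) by (intro dim_le_union[where F=F2]) auto
  also have "card (\<mu> ` C) \<le> card C" by (rule card_image_le[OF BC(10)])
  finally show ?thesis using BC(8) by simp
qed

end

interpretation pv: vector_space "psmult :: 'k::field \<Rightarrow> ('v, 'k) mpoly \<Rightarrow> ('v, 'k) mpoly"
  by unfold_locales
     (simp_all add: psmult_def distrib_left distrib_right single_add mult.assoc[symmetric] mult_single)

interpretation kv: vector_space "(*) :: 'k::field \<Rightarrow> 'k \<Rightarrow> 'k"
  by unfold_locales (simp_all add: algebra_simps)

interpretation pk: vector_space_pair "psmult :: 'k::field \<Rightarrow> ('v, 'k) mpoly \<Rightarrow> ('v, 'k) mpoly" "(*) :: 'k \<Rightarrow> 'k \<Rightarrow> 'k" ..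

lemma psmult_single: "psmult c (sg m 1) = sg m c"
  by (simp add: psmult_def mult_single)

lemma theta_as_linear:
  assumes "Vector_Spaces.linear psmult ((*) :: 'k::field \<Rightarrow> 'k \<Rightarrow> 'k) g"
  shows "theta (\<lambda>m. g (sg m 1)) (p :: ('v, 'k) mpoly) = g p"
proof -
  have "g p = g (\<Sum>m\<in>ks p. psmult (lk p m) (sg m 1))"
    by (subst mpoly_expand[of p]) (simp only: psmult_single)
  also have "\<dots> = (\<Sum>m\<in>ks p. lk p m * g (sg m 1))"
    by (simp add: pk.linear_sum[OF assms] pk.linear_scale[OF assms])
  finally show ?thesis by (simp add: theta_def)
qed

lemma separate:
  fixes W :: "('v, 'k::field) mpoly set"
  assumes "pv.subspace W" "a \<notin> W"
  shows "\<exists>c. (\<forall>p\<in>W. theta c p = 0) \<and> theta c a = 1"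
proof -
  obtain B where B: "B \<subseteq> W" "pv.independent B" "W \<subseteq> pv.span B"
    by (rule pv.maximal_independent_subset)
  have "pv.span B \<subseteq> W" using B(1) assms(1) by (rule pv.span_minimal)
  hence "a \<notin> pv.span B" using assms(2) by blast
  hence ind: "pv.independent (insert a B)" using B(2) by (rule pv.independent_insertI)
  obtain g where g: "Vector_Spaces.linear psmult ((*) :: 'k \<Rightarrow> 'k \<Rightarrow> 'k) g"
    "\<forall>x\<in>insert a B. g x = (if x = a then 1 else 0)"
    using pk.linear_independent_extend[OF ind, of "\<lambda>x. if x = a then 1 else 0"] by blast
  have g0: "g x = 0" if "x \<in> W" for x
  proof -
    have "\<And>y. y \<in> B \<Longrightarrow> g y = 0" using g(2) B(1) assms(2) by auto
    thus ?thesis using pk.linear_eq_0_on_span[OF g(1)] B(3) that by blast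
  qed
  show ?thesis
    by (rule exI[of _ "\<lambda>m. g (sg m 1)"]) (simp add: theta_as_linear[OF g(1)] g0 g(2))
qed

lemma ideal_subspace: "is_ideal I \<Longrightarrow> pv.subspace I"
  by (simp add: pv.subspace_def ideal_0 ideal_add ideal_psmult)

lemma sep_plain:
  assumes "is_ideal (I :: ('v, 'k::field) mpoly set)" "a \<notin> I"
  shows "\<exists>c. (\<forall>p\<in>I. theta c p = 0) \<and> theta c a = 1"
  using separate[OF ideal_subspace[OF assms(1)] assms(2)] .

lemma hom_subspace: "pv.subspace {p :: ('v, 'k::field) mpoly. homogeneous d p}"
  by (simp add: pv.subspace_def hom_add hom_psmult)

lemma ideal_hom_subspace: "is_ideal I \<Longrightarrow> pv.subspace {p :: ('v, 'k::field) mpoly. p \<in> I \<and> homogeneous d p}"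
  by (simp add: pv.subspace_def hom_add hom_psmult ideal_0 ideal_add ideal_psmult)

lemma lookup_le_mdeg: "lk m v \<le> mdeg m"
proof (cases "v \<in> ks m")
  case True thus ?thesis unfolding mdeg_def by (intro member_le_sum) auto
qed (simp add: in_keys_iff)

lemma finite_mdeg: "finite {m :: ('v::finite \<Rightarrow>\<^sub>0 nat). mdeg m = d}"
proof -
  have "lk ` {m :: ('v \<Rightarrow>\<^sub>0 nat). mdeg m = d} \<subseteq>
        {f. \<forall>x. (x \<in> UNIV \<longrightarrow> f x \<in> {0..d}) \<and> (x \<notin> UNIV \<longrightarrow> f x = 0)}"
    using lookup_le_mdeg by fastforce
  moreover have "finite {f :: 'v \<Rightarrow> nat. \<forall>x. (x \<in> UNIV \<longrightarrow> f x \<in> {0..d}) \<and> (x \<notin> UNIV \<longrightarrow> f x = 0)}"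
    by (rule finite_set_of_finite_funs) auto
  ultimately have "finite (lk ` {m :: ('v \<Rightarrow>\<^sub>0 nat). mdeg m = d})" by (rule finite_subset)
  moreover have "inj_on lk {m :: ('v \<Rightarrow>\<^sub>0 nat). mdeg m = d}"
    by (rule inj_onI) (simp add: poly_mapping_eqI)
  ultimately show ?thesis by (rule finite_imageD)
qed

lemma hom_findim:
  "{p :: ('v::finite, 'k::field) mpoly. homogeneous d p} \<subseteq> pv.span ((\<lambda>m. sg m 1) ` {m. mdeg m = d})"
proof
  fix p :: "('v, 'k) mpoly" assume "p \<in> {p. homogeneous d p}"
  hence h: "homogeneous d p" by simp
  have "p = (\<Sum>m\<in>ks p. psmult (lk p m) (sg m 1))"
    by (subst mpoly_expand[of p]) (simp only: psmult_single)
  also have "\<dots> \<in> pv.span ((\<lambda>m. sg m 1) ` {m. mdeg m = d})"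
  proof (intro pv.span_sum pv.span_scale pv.span_base)
    fix m assume "m \<in> ks p"
    hence "mdeg m = d" using h by (simp add: homogeneous_def)
    thus "sg m 1 \<in> (\<lambda>m. sg m 1) ` {m. mdeg m = d}" by blast
  qed
  finally show "p \<in> pv.span ((\<lambda>m. sg m 1) ` {m. mdeg m = d})" .
qed

lemma peak_inj:
  fixes J :: "('v::finite, 'k::field) mpoly set"
  assumes J: "is_ideal J" and l: "homogeneous 1 l" and lt: "hf J (j + 1) < hf J j"
  shows "\<exists>b. homogeneous j b \<and> l * b \<in> J \<and> b \<notin> J"
proof (rule ccontr)
  assume "\<not> ?thesis"
  hence inj: "\<And>b. b \<in> {p. homogeneous j p} \<Longrightarrow> l * b \<in> {p \<in> J. homogeneous (j + 1) p} \<Longrightarrow> b \<in> {p \<in> J. homogeneous j p}"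
    by auto
  have maps: "(\<lambda>x. l * x) ` {p. homogeneous j p} \<subseteq> {p. homogeneous (j + 1) p}"
    using hom_mult[OF l] by (auto simp: add.commute)
  have "pv.dim {p :: ('v, 'k) mpoly. homogeneous j p} - pv.dim {p \<in> J. homogeneous j p}
        \<le> pv.dim {p :: ('v, 'k) mpoly. homogeneous (j + 1) p} - pv.dim {p \<in> J. homogeneous (j + 1) p}"
    apply (rule pv.inj_dim[where \<mu>="\<lambda>x. l * x"])
    apply (rule hom_findim)
    apply (rule finite_imageI[OF finite_mdeg])
    apply (rule hom_findim)
    apply (rule finite_imageI[OF finite_mdeg])
    apply blast
    apply blast
    apply (rule hom_subspace)
    apply (rule ideal_hom_subspace[OF J])
    apply (simp add: distrib_left)
    apply (simp add: psmult_assoc_mult)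
    apply (rule maps)
    apply (erule (1) inj)
    done
  thus False using lt unfolding hf_def by simp
qed

lemma peak_surj:
  fixes J :: "('v::finite, 'k::field) mpoly set"
  assumes J: "is_ideal J" and l: "homogeneous 1 l" and lt: "hf J d < hf J (Suc d)"
  shows "\<exists>g. homogeneous (Suc d) g \<and> (\<forall>h. homogeneous d h \<longrightarrow> g - l * h \<notin> J)"
proof (rule ccontr)
  assume "\<not> ?thesis"
  hence surj: "\<And>y. y \<in> {p. homogeneous (Suc d) p} \<Longrightarrow> \<exists>x\<in>{p. homogeneous d p}. y - l * x \<in> {p \<in> J. homogeneous (Suc d) p}"
    using hom_diff hom_mult[OF l] by fastforce
  have mapsU: "(\<lambda>x. l * x) ` {p \<in> J. homogeneous d p} \<subseteq> {p \<in> J. homogeneous (Suc d) p}"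
    using hom_mult[OF l] ideal_mult[OF J] by auto
  have "pv.dim {p :: ('v, 'k) mpoly. homogeneous (Suc d) p} - pv.dim {p \<in> J. homogeneous (Suc d) p}
        \<le> pv.dim {p :: ('v, 'k) mpoly. homogeneous d p} - pv.dim {p \<in> J. homogeneous d p}"
    apply (rule pv.surj_dim[where \<mu>="\<lambda>x. l * x"])
    apply (rule hom_findim)
    apply (rule finite_imageI[OF finite_mdeg])
    apply (rule hom_findim)
    apply (rule finite_imageI[OF finite_mdeg])
    apply blast
    apply blast
    apply (rule ideal_hom_subspace[OF J])
    apply (rule ideal_hom_subspace[OF J])
    apply (simp add: distrib_left)
    apply (simp add: psmult_assoc_mult)
    apply (rule mapsU)
    apply (erule surj)
    done
  thus False using lt unfolding hf_def by simp
qed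

lemma sep_surj:
  fixes I :: "('v, 'k::field) mpoly set"
  assumes I: "homog_ideal I" and l: "homogeneous 1 l" and g: "homogeneous (Suc d) g"
    and ng: "\<forall>h. homogeneous d h \<longrightarrow> g - l * h \<notin> I"
  shows "\<exists>c. (\<forall>p\<in>I. theta c p = 0) \<and> (\<forall>h. homogeneous d h \<longrightarrow> theta c (l * h) = 0)
             \<and> (\<forall>m. mdeg m \<noteq> Suc d \<longrightarrow> c m = 0) \<and> theta c g = 1"
proof -
  have Ii: "is_ideal I" using I by (simp add: homog_ideal_def)
  define W where "W = {p. \<exists>h. homogeneous d h \<and> hcomp (Suc d) p - l * h \<in> I}"
  have sW: "pv.subspace W"
  proof (rule pv.subspaceI)
    show "0 \<in> W" unfolding W_def using ideal_0[OF Ii] by (intro CollectI exI[of _ 0]) simp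
  next
    fix x y assume "x \<in> W" "y \<in> W"
    then obtain hx hy where h: "homogeneous d hx" "hcomp (Suc d) x - l * hx \<in> I"
      "homogeneous d hy" "hcomp (Suc d) y - l * hy \<in> I" unfolding W_def by blast
    have "hcomp (Suc d) (x + y) - l * (hx + hy) = (hcomp (Suc d) x - l * hx) + (hcomp (Suc d) y - l * hy)"
      by (simp add: hcomp_add algebra_simps)
    hence "hcomp (Suc d) (x + y) - l * (hx + hy) \<in> I" using h(2,4) ideal_add[OF Ii] by simp
    moreover have "homogeneous d (hx + hy)" using h(1,3) by (rule hom_add)
    ultimately show "x + y \<in> W" unfolding W_def by blast
  next
    fix c x assume "x \<in> W"
    then obtain h where h: "homogeneous d h" "hcomp (Suc d) x - l * h \<in> I" unfolding W_def by blast
    have "hcomp (Suc d) (psmult c x) - l * psmult c h = psmult c (hcomp (Suc d) x - l * h)"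
      by (simp only: hcomp_psmult) (simp add: psmult_def algebra_simps)
    hence "hcomp (Suc d) (psmult c x) - l * psmult c h \<in> I" using h(2) ideal_psmult[OF Ii] by simp
    moreover have "homogeneous d (psmult c h)" using h(1) by (rule hom_psmult)
    ultimately show "psmult c x \<in> W" unfolding W_def by blast
  qed
  have gW: "g \<notin> W" unfolding W_def using ng hcomp_hom[OF g] by auto
  obtain c where c: "\<forall>p\<in>W. theta c p = 0" "theta c g = 1" using separate[OF sW gW] by blast
  have "\<forall>p\<in>I. theta c p = 0"
  proof
    fix p assume "p \<in> I"
    hence "hcomp (Suc d) p \<in> I" using I by (simp add: homog_ideal_def)
    hence "p \<in> W" unfolding W_def by (intro CollectI exI[of _ 0]) simp
    thus "theta c p = 0" using c by blast
  qed
  moreover have "\<forall>h. homogeneous d h \<longrightarrow> theta c (l * h) = 0"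
  proof (intro allI impI)
    fix h :: "('v, 'k) mpoly" assume h: "homogeneous d h"
    have "homogeneous (Suc d) (l * h)" using hom_mult[OF l h] by simp
    hence "l * h \<in> W" unfolding W_def using h ideal_0[OF Ii] by (intro CollectI exI[of _ h]) (simp add: hcomp_hom)
    thus "theta c (l * h) = 0" using c by blast
  qed
  moreover have "\<forall>m. mdeg m \<noteq> Suc d \<longrightarrow> c m = 0"
  proof (intro allI impI)
    fix m :: "'v \<Rightarrow>\<^sub>0 nat" assume "mdeg m \<noteq> Suc d"
    hence "sg m 1 \<in> W" unfolding W_def using ideal_0[OF Ii]
      by (intro CollectI exI[of _ 0]) (simp add: hcomp_single_other)
    thus "c m = 0" using c theta_single[of c m 1] by simp
  qed
  ultimately show ?thesis using c(2) by blast
qed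

lemma theta_vanish: "homogeneous d f \<Longrightarrow> (\<forall>m. mdeg m = d \<longrightarrow> c m = 0) \<Longrightarrow> theta c f = 0"
  unfolding theta_def homogeneous_def by (intro sum.neutral) auto

lemma contract_zero:
  assumes "\<forall>h. homogeneous d h \<longrightarrow> theta c (l * h) = 0" "mdeg w = d"
  shows "theta (\<lambda>b. c (w + b)) l = 0"
proof -
  have "homogeneous d (sg w 1)" using hom_single[of w 1] assms(2) by simp
  hence "theta c (l * sg w 1) = 0" using assms(1) by blast
  moreover have "theta c (l * sg w 1) = theta (\<lambda>b. c (w + b)) l"
    by (simp add: mult.commute[of l] theta_mult theta_single)
  ultimately show ?thesis by simp
qed

theorem theorem3p2:
  fixes I :: "('a::finite, 'k::field) mpoly set"
    and J :: "('b::finite, 'k) mpoly set"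
    and i j :: nat
  assumes "std_graded_artinian I"
    and "std_graded_artinian J"
    and "fails_WLP_in I i"
    and "isolated_peak J j"
  shows "\<not> has_WLP (tensor_ideal I J) \<and> fails_WLP_in (tensor_ideal I J) (i + j)"
proof -
  have Ih: "homog_ideal I" and Jh: "homog_ideal J"
    using assms(1,2) by (simp_all add: std_graded_artinian_def)
  hence Ii: "is_ideal I" and Ji: "is_ideal J" by (simp_all add: homog_ideal_def)
  have j1: "j \<ge> 1" and lt1: "hf J (j - 1) < hf J j" and lt2: "hf J (j + 1) < hf J j"
    using assms(4) by (simp_all add: isolated_peak_def)
  have lt1': "hf J (j - 1) < hf J (Suc (j - 1))" using lt1 j1 by simp
  let ?T = "tensor_ideal I J"
  have Ti: "is_ideal ?T" unfolding tensor_ideal_def by (rule is_ideal_gen)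
  have embl_in: "emb_l p \<in> ?T" if "p \<in> I" for p
    unfolding tensor_ideal_def by (rule subsetD[OF ideal_gen_sub]) (use that in blast)
  have embr_in: "emb_r q \<in> ?T" if "q \<in> J" for q
    unfolding tensor_ideal_def by (rule subsetD[OF ideal_gen_sub]) (use that in blast)
  have fails: "fails_WLP_in ?T (i + j)"
    unfolding fails_WLP_in_def
  proof (intro allI impI)
    fix l :: "('a + 'b, 'k) mpoly" assume l: "homogeneous 1 l"
    define l1 where "l1 = restr_l l"
    define l2 where "l2 = restr_r l"
    have l1h: "homogeneous 1 l1" unfolding l1_def using l by (rule hom_restr_l)
    have l2h: "homogeneous 1 l2" unfolding l2_def using l by (rule hom_restr_r)
    have lsplit: "l = emb_l l1 + emb_r l2" unfolding l1_def l2_def using l by (rule split_linear)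
    have nmr: "\<not> max_rank I l1 i" using assms(3) l1h by (simp add: fails_WLP_in_def)
    then obtain a where a: "homogeneous i a" "l1 * a \<in> I" "a \<notin> I"
      unfolding max_rank_def by blast
    obtain g1 where g1: "homogeneous (Suc i) g1" "\<forall>h. homogeneous i h \<longrightarrow> g1 - l1 * h \<notin> I"
      using nmr unfolding max_rank_def by auto
    obtain b where b: "homogeneous j b" "l2 * b \<in> J" "b \<notin> J"
      using peak_inj[OF Ji l2h lt2] by blast
    obtain g2 where g2: "homogeneous (Suc (j - 1)) g2" "\<forall>h. homogeneous (j - 1) h \<longrightarrow> g2 - l2 * h \<notin> J"
      using peak_surj[OF Ji l2h lt1'] by blast
    show "\<not> max_rank ?T l (i + j)"
      unfolding max_rank_def
    proof (intro notI, elim disjE)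
      assume inj: "\<forall>f. homogeneous (i + j) f \<and> l * f \<in> ?T \<longrightarrow> f \<in> ?T"
      let ?f = "emb_l a * emb_r b :: ('a + 'b, 'k) mpoly"
      have fh: "homogeneous (i + j) ?f" by (intro hom_mult hom_emb_l hom_emb_r a(1) b(1))
      have "l * ?f = emb_l (l1 * a) * emb_r b + emb_l a * emb_r (l2 * b)"
        by (simp add: lsplit emb_l_mult emb_r_mult algebra_simps)
      moreover have "emb_l (l1 * a) * emb_r b \<in> ?T"
        by (rule ideal_mult_right[OF Ti embl_in[OF a(2)]])
      moreover have "emb_l a * emb_r (l2 * b) \<in> ?T"
        by (rule ideal_mult[OF Ti embr_in[OF b(2)]])
      ultimately have "l * ?f \<in> ?T" using ideal_add[OF Ti] by simp
      hence fT: "?f \<in> ?T" using inj fh by blast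
      obtain c1 where c1: "\<forall>p\<in>I. theta c1 p = 0" "theta c1 a = 1" using sep_plain[OF Ii a(3)] by blast
      obtain c2 where c2: "\<forall>p\<in>J. theta c2 p = 0" "theta c2 b = 1" using sep_plain[OF Ji b(3)] by blast
      have "?T \<subseteq> Ann (tc c1 c2)"
        by (rule tensor_sub_Ann[OF ideal_sub_Ann[OF Ii c1(1)] ideal_sub_Ann[OF Ji c2(1)]])
      hence "theta (tc c1 c2) ?f = 0" using fT Ann_theta by blast
      moreover have "theta (tc c1 c2) ?f = 1" using c1(2) c2(2) by (simp add: theta_tc_prod)
      ultimately show False by simp
    next
      assume surj: "\<forall>g. homogeneous (i + j + 1) g \<longrightarrow> (\<exists>f. homogeneous (i + j) f \<and> g - l * f \<in> ?T)"
      let ?g = "emb_l g1 * emb_r g2 :: ('a + 'b, 'k) mpoly"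
      have "homogeneous (Suc i + Suc (j - 1)) ?g" by (intro hom_mult hom_emb_l hom_emb_r g1(1) g2(1))
      hence gh: "homogeneous (i + j + 1) ?g" using j1 by simp
      obtain f where f: "homogeneous (i + j) f" "?g - l * f \<in> ?T" using surj gh by blast
      obtain c1 where c1: "\<forall>p\<in>I. theta c1 p = 0" "\<forall>h. homogeneous i h \<longrightarrow> theta c1 (l1 * h) = 0"
          "\<forall>m. mdeg m \<noteq> Suc i \<longrightarrow> c1 m = 0" "theta c1 g1 = 1"
        using sep_surj[OF Ih l1h g1] by blast
      obtain c2 where c2: "\<forall>p\<in>J. theta c2 p = 0" "\<forall>h. homogeneous (j - 1) h \<longrightarrow> theta c2 (l2 * h) = 0"
          "\<forall>m. mdeg m \<noteq> Suc (j - 1) \<longrightarrow> c2 m = 0" "theta c2 g2 = 1"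
        using sep_surj[OF Jh l2h g2] by blast
      let ?c = "tc c1 c2"
      have "?T \<subseteq> Ann ?c"
        by (rule tensor_sub_Ann[OF ideal_sub_Ann[OF Ii c1(1)] ideal_sub_Ann[OF Ji c2(1)]])
      hence t0: "theta ?c (?g - l * f) = 0" using f(2) Ann_theta by blast
      have t1: "theta ?c ?g = 1" using c1(4) c2(4) by (simp add: theta_tc_prod)
      have inner: "theta (\<lambda>b. ?c (u + b)) l = 0" if u: "mdeg u = i + j" for u
      proof -
        have eq: "theta (\<lambda>b. ?c (u + b)) l =
            c2 (ypart u) * theta (\<lambda>b. c1 (xpart u + b)) l1 + c1 (xpart u) * theta (\<lambda>b. c2 (ypart u + b)) l2"
          by (subst lsplit) (rule theta_tc_linear)
        have du: "mdeg (xpart u) + mdeg (ypart u) = i + j" using u mdeg_split[of u] by simp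
        show ?thesis
        proof (cases "mdeg (ypart u) = j")
          case True
          hence "mdeg (xpart u) = i" using du by simp
          hence "theta (\<lambda>b. c1 (xpart u + b)) l1 = 0" "c1 (xpart u) = 0"
            using contract_zero[OF c1(2)] c1(3) by auto
          thus ?thesis using eq by simp
        next
          case False
          hence z2: "c2 (ypart u) = 0" using c2(3) j1 by auto
          show ?thesis
          proof (cases "mdeg (xpart u) = Suc i")
            case True
            hence "mdeg (ypart u) = j - 1" using du by simp
            hence "theta (\<lambda>b. c2 (ypart u + b)) l2 = 0" using contract_zero[OF c2(2)] by auto
            thus ?thesis using eq z2 by simp
          next
            case False
            hence "c1 (xpart u) = 0" using c1(3) by auto
            thus ?thesis using eq z2 by simp
          qed
        qed
      qed
      have "theta ?c (l * f) = theta (\<lambda>u. theta (\<lambda>b. ?c (u + b)) l) f"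
        by (simp only: mult.commute[of l] theta_mult)
      also have "\<dots> = 0" using f(1) inner by (intro theta_vanish) auto
      finally have "theta ?c (l * f) = 0" .
      thus False using t0 t1 by (simp add: theta_diff)
    qed
  qed
  have "\<not> has_WLP ?T" using fails unfolding has_WLP_def fails_WLP_in_def by blast
  thus ?thesis using fails by blast
qed


end
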